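(* For every integer $k$ with $1\le k\le p-1$ and all $s\in\mathcal S_0^{(k)}$, $t\in\mathcal T_0^{(k)}$ one has $\langle s,t\rangle_k^{\rm BD}=\langle s,t\rangle_k^{\rm Boc}$ in $\mathcal Q^k$.
   Context: Let $p$ be a prime, $n\ge1$, $G$ a cyclic group of order $p^n$ with generator $\gamma$, $\mathcal R=\mathbb Z/p^n[G]$, $\mathcal I\subset\mathcal R$ the augmentation ideal, $\mathcal Q^k=\mathcal I^k/\mathcal I^{k+1}$, $N=\sum_{g\in G}g$. For an $\mathcal R$-module $M$, $M^\ast=\mathrm{Hom}_{\mathcal R}(M,\mathcal R)$ and $M_0=M^G$. Let $\mathcal S,\mathcal T$ be finitely generated $\mathcal R$-modules, $X,Y$ free $\mathcal R$-modules of finite rank, and $0\to\mathcal S\to X\xrightarrow{\ell}Y^\ast\to\mathcal T^\ast\to0$ exact; its dual is $0\to\mathcal T\to Y\xrightarrow{\ell^\ast}X^\ast\to\mathcal S^\ast\to0$ with $\ell^\ast(y)(x)=\ell(x)(y)$; we regard $\mathcal S\subset X$, $\mathcal T\subset Y$. Put $\mathcal S_0^{(k)}=\mathcal S_0\cap\mathcal I^{k-1}\mathcal S$, $\mathcal T_0^{(k)}=\mathcal T_0\cap\mathcal I^{k-1}\mathcal T$. Bertolini–Darmon pairing: $D^{(k)}=(-1)^k\sum_{i=0}^{p^n-1}\binom ik\gamma^{i-k}$. For $1\le k\le p-1$, $s\in\mathcal S_0^{(k)}$, $t\in\mathcal T_0^{(k)}$, choose $\tilde s\in\mathcal S$, $\tilde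 t\in\mathcal T$ with $(\gamma-1)^{k-1}\tilde s=s$, $(\gamma-1)^{k-1}\tilde t=t$, and $x_s\in X$, $y_t\in Y$ with $D^{(k-1)}x_s=\tilde s$, $D^{(k-1)}y_t=\tilde t$ (these exist); then $\ell(x_s)(y_t)\in\mathcal I^k$ and $\langle s,t\rangle^{\rm BD}_k$ is its class in $\mathcal Q^k$ (independent of all choices). Bockstein pairing: let $C=[X\xrightarrow{\ell}Y^\ast]$ (degrees 1,2) with filtration $\mathcal I^iC$ and spectral sequence $E_k^{i,j}=Z_k^{i,j}/(Z_{k-1}^{i+1,j-1}+B_{k-1}^{i,j})$, $Z_k^{i,j}=\ker(\mathcal I^iC^{i+j}\to C^{i+j+1}/\mathcal I^{i+k}C^{i+j+1})$, $B_k^{i,j}=\mathcal I^iC^{i+j}\cap d(\mathcal I^{i-k}C^{i+j-1})$ ($\mathcal I^m=\mathcal R$ for $m\le0$), differentials induced by $d$. Thus $E_k^{0,1}=\{x\in X:\ell(x)\in\mathcal I^kY^\ast\}/\{x\in\mathcal IX:\ell(x)\in\mathcal I^kY^\ast\}$, $E_k^{k,2-k}=\mathcal I^kY^\ast/(\mathcal I^{k+1}Y^\ast+\mathcal I^kY^\ast\cap\ell(\mathcal IX))$, and the derived Bockstein map $\beta^{(k)}=d_k^{0,1}$ sends the class of $x$ to the class of $\ell(x)$. Let $F_k^{i,j}$ be the analogous spectral sequence for $D=[Y\xrightarrow{\ell^\ast}X^\ast]$. The paper identifies $E_k^{0,1}\cong\mathcal S_0^{(k)}$ and $F_k^{0,1}\cong\mathcal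 T_0^{(k)}$ via the maps induced by $x\mapsto Nx$, $y\mapsto Ny$, and uses the cup product $E_k^{k,2-k}\times F_k^{0,1}\to\mathcal Q^k$, (class of $f$, class of $y$) $\mapsto f(y)\bmod\mathcal I^{k+1}$, to get $\iota_k:E_k^{k,2-k}\to\mathrm{Hom}(\mathcal T_0^{(k)},\mathcal Q^k)$. Then $\langle s,t\rangle_k^{\rm Boc}:=\iota_k(\beta^{(k)}(s))(t)$. *)

theory Defs
  imports Main "HOL-Computational_Algebra.Primes"
begin

text \<open>An element of R is represented canonically as a function G -> Z/q,
  where G = {0..<q} (written additively, gamma corresponds to 1), with values
  in {0..<q} and value 0 outside {0..<q}.\<close>

type_synonym relt = "nat \<Rightarrow> int"
type_synonym vect = "nat \<Rightarrow> relt"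

definition rcarrier :: "nat \<Rightarrow> relt set" where
  "rcarrier q = {f. (\<forall>i<q. 0 \<le> f i \<and> f i < int q) \<and> (\<forall>i. q \<le> i \<longrightarrow> f i = 0)}"

definition rzero :: relt where "rzero = (\<lambda>_. 0)"

definition radd :: "nat \<Rightarrow> relt \<Rightarrow> relt \<Rightarrow> relt" where
  "radd q f g = (\<lambda>i. if i < q then (f i + g i) mod int q else 0)"

definition rneg :: "nat \<Rightarrow> relt \<Rightarrow> relt" where
  "rneg q f = (\<lambda>i. if i < q then (- f i) mod int q else 0)"

definition rmul :: "nat \<Rightarrow> relt \<Rightarrow> relt \<Rightarrow> relt" where
  "rmul q f g = (\<lambda>i. if i < q then (\<Sum>j<q. f j * g ((i + q - j) mod q)) mod int q else 0)"

definition rone :: "nat \<Rightarrow> relt" where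
  "rone q = (\<lambda>i. if i = 0 then 1 mod int q else 0)"

definition rscal :: "nat \<Rightarrow> int \<Rightarrow> relt \<Rightarrow> relt" where
  "rscal q c f = (\<lambda>i. if i < q then (c * f i) mod int q else 0)"

definition gam :: "nat \<Rightarrow> relt" where
  "gam q = (\<lambda>i. if i < q \<and> i = 1 mod q then 1 mod int q else 0)"

text \<open>the norm element N = sum of all g in G\<close>
definition Nrm :: "nat \<Rightarrow> relt" where
  "Nrm q = (\<lambda>i. if i < q then 1 mod int q else 0)"

fun rpow :: "nat \<Rightarrow> relt \<Rightarrow> nat \<Rightarrow> relt" where
  "rpow q f 0 = rone q"
| "rpow q f (Suc k) = rmul q (rpow q f k) f"

fun rsumn :: "nat \<Rightarrow> (nat \<Rightarrow> relt) \<Rightarrow> nat \<Rightarrow> relt" where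
  "rsumn q F 0 = rzero"
| "rsumn q F (Suc m) = radd q (rsumn q F m) (F m)"

definition gm1 :: "nat \<Rightarrow> relt" where
  "gm1 q = radd q (gam q) (rneg q (rone q))"

definition augI :: "nat \<Rightarrow> relt set" where
  "augI q = {f \<in> rcarrier q. (\<Sum>i<q. f i) mod int q = 0}"

inductive_set iprod :: "nat \<Rightarrow> relt set \<Rightarrow> relt set \<Rightarrow> relt set"
  for q :: nat and A :: "relt set" and B :: "relt set" where
  iprod_zero: "rzero \<in> iprod q A B"
| iprod_mul: "a \<in> A \<Longrightarrow> b \<in> B \<Longrightarrow> rmul q a b \<in> iprod q A B"
| iprod_add: "u \<in> iprod q A B \<Longrightarrow> v \<in> iprod q A B \<Longrightarrow> radd q u v \<in> iprod q A B"

fun Ipow :: "nat \<Rightarrow> nat \<Rightarrow> relt set" where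
  "Ipow q 0 = rcarrier q"
| "Ipow q (Suc k) = iprod q (augI q) (Ipow q k)"

text \<open>class of u in R / I^(k+1); Q^k = I^k/I^(k+1) sits inside R/I^(k+1)\<close>
definition qcls :: "nat \<Rightarrow> nat \<Rightarrow> relt \<Rightarrow> relt set" where
  "qcls q k u = {v \<in> rcarrier q. radd q u (rneg q v) \<in> Ipow q (Suc k)}"

definition vcarrier :: "nat \<Rightarrow> nat \<Rightarrow> vect set" where
  "vcarrier q m = {x. (\<forall>j<m. x j \<in> rcarrier q) \<and> (\<forall>j. m \<le> j \<longrightarrow> x j = rzero)}"

definition vzero :: vect where "vzero = (\<lambda>_. rzero)"

definition vadd :: "nat \<Rightarrow> vect \<Rightarrow> vect \<Rightarrow> vect" where
  "vadd q x y = (\<lambda>j. radd q (x j) (y j))"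

definition smul :: "nat \<Rightarrow> relt \<Rightarrow> vect \<Rightarrow> vect" where
  "smul q r x = (\<lambda>j. rmul q r (x j))"

inductive_set mprod :: "nat \<Rightarrow> relt set \<Rightarrow> vect set \<Rightarrow> vect set"
  for q :: nat and J :: "relt set" and V :: "vect set" where
  mprod_zero: "vzero \<in> mprod q J V"
| mprod_mul: "r \<in> J \<Longrightarrow> v \<in> V \<Longrightarrow> smul q r v \<in> mprod q J V"
| mprod_add: "u \<in> mprod q J V \<Longrightarrow> w \<in> mprod q J V \<Longrightarrow> vadd q u w \<in> mprod q J V"

section \<open>The map l : X = R^a -> Y^* = R^b (dual basis), given by a b x a matrix M\<close>

text \<open>evaluation f(y) of f in Y^* (coordinates w.r.t. the dual basis) at y in Y = R^m\<close>
definition evp :: "nat \<Rightarrow> nat \<Rightarrow> vect \<Rightarrow> vect \<Rightarrow> relt" where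
  "evp q m f y = rsumn q (\<lambda>i. rmul q (f i) (y i)) m"

definition ell :: "nat \<Rightarrow> nat \<Rightarrow> nat \<Rightarrow> (nat \<Rightarrow> nat \<Rightarrow> relt) \<Rightarrow> vect \<Rightarrow> vect" where
  "ell q a b M x = (\<lambda>i. if i < b then rsumn q (\<lambda>j. rmul q (M i j) (x j)) a else rzero)"

text \<open>the dual map l^* : Y -> X^*, l^*(y)(x) = l(x)(y)\<close>
definition ellstar :: "nat \<Rightarrow> nat \<Rightarrow> nat \<Rightarrow> (nat \<Rightarrow> nat \<Rightarrow> relt) \<Rightarrow> vect \<Rightarrow> vect" where
  "ellstar q a b M y = (\<lambda>j. if j < a then rsumn q (\<lambda>i. rmul q (M i j) (y i)) b else rzero)"

definition Ssub :: "nat \<Rightarrow> nat \<Rightarrow> nat \<Rightarrow> (nat \<Rightarrow> nat \<Rightarrow> relt) \<Rightarrow> vect set" where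
  "Ssub q a b M = {x \<in> vcarrier q a. ell q a b M x = vzero}"

definition Tsub :: "nat \<Rightarrow> nat \<Rightarrow> nat \<Rightarrow> (nat \<Rightarrow> nat \<Rightarrow> relt) \<Rightarrow> vect set" where
  "Tsub q a b M = {y \<in> vcarrier q b. ellstar q a b M y = vzero}"

definition fixedpart :: "nat \<Rightarrow> vect set \<Rightarrow> vect set" where
  "fixedpart q V = {v \<in> V. smul q (gam q) v = v}"

definition S0k :: "nat \<Rightarrow> nat \<Rightarrow> nat \<Rightarrow> (nat \<Rightarrow> nat \<Rightarrow> relt) \<Rightarrow> nat \<Rightarrow> vect set" where
  "S0k q a b M k = fixedpart q (Ssub q a b M) \<inter> mprod q (Ipow q (k - 1)) (Ssub q a b M)"

definition T0k :: "nat \<Rightarrow> nat \<Rightarrow> nat \<Rightarrow> (nat \<Rightarrow> nat \<Rightarrow> relt) \<Rightarrow> nat \<Rightarrow> vect set" where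
  "T0k q a b M k = fixedpart q (Tsub q a b M) \<inter> mprod q (Ipow q (k - 1)) (Tsub q a b M)"

text \<open>D^(j) = (-1)^j sum_{i=0}^{q-1} (i choose j) gamma^(i-j)  (terms with i<j vanish)\<close>
definition Dop :: "nat \<Rightarrow> nat \<Rightarrow> relt" where
  "Dop q j = rsumn q (\<lambda>i. rscal q ((-1)^j * int (i choose j)) (rpow q (gam q) (i - j))) q"

definition bd_pair :: "nat \<Rightarrow> nat \<Rightarrow> nat \<Rightarrow> (nat \<Rightarrow> nat \<Rightarrow> relt) \<Rightarrow> nat \<Rightarrow> vect \<Rightarrow> vect \<Rightarrow> relt set" where
  "bd_pair q a b M k s t =
    (case (SOME (st, tt, xs, yt).
        st \<in> Ssub q a b M \<and> tt \<in> Tsub q a b M \<and>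
        smul q (rpow q (gm1 q) (k - 1)) st = s \<and> smul q (rpow q (gm1 q) (k - 1)) tt = t \<and>
        xs \<in> vcarrier q a \<and> yt \<in> vcarrier q b \<and>
        smul q (Dop q (k - 1)) xs = st \<and> smul q (Dop q (k - 1)) yt = tt)
     of (st, tt, xs, yt) \<Rightarrow> qcls q k (evp q b (ell q a b M xs) yt))"

text \<open>Bockstein pairing: s corresponds to the class of x in E_k^{0,1} with N x = s,
  t to the class of y in F_k^{0,1} with N y = t; beta^(k) sends x to l(x) in
  E_k^{k,2-k}, and the cup product gives l(x)(y) mod I^(k+1).\<close>
definition boc_pair :: "nat \<Rightarrow> nat \<Rightarrow> nat \<Rightarrow> (nat \<Rightarrow> nat \<Rightarrow> relt) \<Rightarrow> nat \<Rightarrow> vect \<Rightarrow> vect \<Rightarrow> relt set" where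
  "boc_pair q a b M k s t =
    (case (SOME (x, y).
        x \<in> vcarrier q a \<and> ell q a b M x \<in> mprod q (Ipow q k) (vcarrier q b) \<and>
        smul q (Nrm q) x = s \<and>
        y \<in> vcarrier q b \<and> ellstar q a b M y \<in> mprod q (Ipow q k) (vcarrier q a) \<and>
        smul q (Nrm q) y = t)
     of (x, y) \<Rightarrow> qcls q k (evp q b (ell q a b M x) y))"

end

theory Submission
  imports Defs "HOL-Algebra.Ring"
begin

lemma mod2: "x < 2 * q \<Longrightarrow> (x::nat) mod q = (if x < q then x else x - q)"
proof (cases "x < q")
  case False
  assume "x < 2 * q"
  then have "x - q < q" by simp
  then show ?thesis using False by (simp add: le_mod_geq)
qed simp

lemma sum_mod_cong:
  assumes "\<And>j. j \<in> A \<Longrightarrow> f j mod m = g j mod (m::int)"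
  shows "sum f A mod m = sum g A mod m"
proof -
  have "sum f A mod m = (\<Sum>j\<in>A. f j mod m) mod m" by (simp add: mod_sum_eq)
  also have "\<dots> = (\<Sum>j\<in>A. g j mod m) mod m" using assms by (simp cong: sum.cong)
  also have "\<dots> = sum g A mod m" by (simp add: mod_sum_eq)
  finally show ?thesis .
qed

locale qr =
  fixes q :: nat
  assumes q1: "1 < q"
begin

definition sb :: "nat \<Rightarrow> nat \<Rightarrow> nat" where "sb i j = (i + q - j) mod q"

lemma q0: "0 < q" using q1 by simp

lemma sb_lt: "sb i j < q" unfolding sb_def using q0 by simp

lemma sb_eq: "i < q \<Longrightarrow> j < q \<Longrightarrow> sb i j = (if j \<le> i then i - j else i + q - j)"
  unfolding sb_def by (subst mod2) auto
lemma am_eq: "(m::nat) < q \<Longrightarrow> l < q \<Longrightarrow> (m + l) mod q = (if m + l < q then m + l else m + l - q)"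
  using mod2[of "m+l" q] by simp
lemma sb_shift1: "m < q \<Longrightarrow> l < q \<Longrightarrow> sb ((m + l) mod q) l = m"
  by (simp add: am_eq sb_eq split: if_split; arith)
lemma sb_shift4: "i < q \<Longrightarrow> a < q \<Longrightarrow> l < q \<Longrightarrow> sb (sb i l) (sb a l) = sb i a"
  by (simp add: sb_eq sb_lt split: if_split; arith)
lemma sb_shift3: "j < q \<Longrightarrow> l < q \<Longrightarrow> (sb j l + l) mod q = j"
  by (simp add: am_eq sb_eq sb_lt split: if_split; arith)
lemma sb_invol: "i < q \<Longrightarrow> j < q \<Longrightarrow> sb i (sb i j) = j"
  by (simp add: sb_eq sb_lt split: if_split; arith)

lemma sb_0: "i < q \<Longrightarrow> sb i 0 = i"
  unfolding sb_def by simp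

lemma rc_iff: "f \<in> rcarrier q \<longleftrightarrow> (\<forall>i<q. f i mod int q = f i) \<and> (\<forall>i. q \<le> i \<longrightarrow> f i = 0)"
proof -
  have "\<And>x. (0 \<le> x \<and> x < int q) \<longleftrightarrow> x mod int q = x"
    using q0 by (metis mod_pos_pos_trivial of_nat_0_less_iff pos_mod_bound pos_mod_sign)
  then show ?thesis unfolding rcarrier_def by auto
qed

lemma rc_mod: "f \<in> rcarrier q \<Longrightarrow> f i mod int q = f i"
  using rc_iff by (cases "i < q") auto

lemma rc_out: "f \<in> rcarrier q \<Longrightarrow> q \<le> i \<Longrightarrow> f i = 0"
  unfolding rcarrier_def by auto

lemma rcI: "(\<And>i. i < q \<Longrightarrow> f i mod int q = f i) \<Longrightarrow> (\<And>i. q \<le> i \<Longrightarrow> f i = 0) \<Longrightarrow> f \<in> rcarrier q"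
  using rc_iff by auto

lemma radd_rc[simp]: "radd q f g \<in> rcarrier q"
  by (rule rcI) (auto simp: radd_def)
lemma rneg_rc[simp]: "rneg q f \<in> rcarrier q"
  by (rule rcI) (auto simp: rneg_def)
lemma rmul_rc[simp]: "rmul q f g \<in> rcarrier q"
  by (rule rcI) (auto simp: rmul_def)
lemma rscal_rc[simp]: "rscal q c f \<in> rcarrier q"
  by (rule rcI) (auto simp: rscal_def)
lemma rzero_rc[simp]: "rzero \<in> rcarrier q"
  by (rule rcI) (auto simp: rzero_def)
lemma rone_rc[simp]: "rone q \<in> rcarrier q"
  using q0 by (rule_tac rcI) (auto simp: rone_def)
lemma gam_rc[simp]: "gam q \<in> rcarrier q"
  by (rule rcI) (auto simp: gam_def)
lemma Nrm_rc[simp]: "Nrm q \<in> rcarrier q"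
  by (rule rcI) (auto simp: Nrm_def)

lemma rmul_at: "i < q \<Longrightarrow> rmul q f g i = (\<Sum>j<q. f j * g (sb i j)) mod int q"
  by (simp add: rmul_def sb_def)

lemma rc_ext: "f \<in> rcarrier q \<Longrightarrow> g \<in> rcarrier q \<Longrightarrow> (\<And>i. i < q \<Longrightarrow> f i = g i) \<Longrightarrow> f = g"
  by (rule ext) (metis linorder_not_le rc_out)

lemma rmul_comm: "rmul q f g = rmul q g f"
proof (rule rc_ext[OF rmul_rc rmul_rc])
  fix i assume i: "i < q"
  have "(\<Sum>j<q. f j * g (sb i j)) = (\<Sum>j<q. g j * f (sb i j))"
    by (rule sum.reindex_bij_witness[where i="sb i" and j="sb i"])
       (auto simp: sb_invol sb_lt i)
  then show "rmul q f g i = rmul q g f i" using i by (simp add: rmul_at)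
qed

lemma rmul_assoc:
  assumes "f \<in> rcarrier q" "g \<in> rcarrier q" "h \<in> rcarrier q"
  shows "rmul q (rmul q f g) h = rmul q f (rmul q g h)"
proof (rule rc_ext[OF rmul_rc rmul_rc])
  fix i assume i: "i < q"
  have inner: "(\<Sum>j<q. g (sb j l) * h (sb i j)) = (\<Sum>m<q. g m * h (sb (sb i l) m))" if l: "l < q" for l
    by (rule sum.reindex_bij_witness[where i="\<lambda>m. (m + l) mod q" and j="\<lambda>j. sb j l"])
       (auto simp: sb_lt sb_shift1 sb_shift4 sb_shift3 l i q0)
  have "rmul q (rmul q f g) h i = (\<Sum>j<q. rmul q f g j * h (sb i j)) mod int q"
    using i by (simp add: rmul_at)
  also have "\<dots> = (\<Sum>j<q. (\<Sum>l<q. f l * g (sb j l)) * h (sb i j)) mod int q"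
    by (rule sum_mod_cong) (simp add: rmul_at mod_mult_left_eq)
  also have "(\<Sum>j<q. (\<Sum>l<q. f l * g (sb j l)) * h (sb i j)) = (\<Sum>j<q. \<Sum>l<q. f l * (g (sb j l) * h (sb i j)))"
    by (simp add: sum_distrib_right mult.assoc)
  also have "\<dots> = (\<Sum>l<q. \<Sum>j<q. f l * (g (sb j l) * h (sb i j)))"
    by (rule sum.swap)
  also have "\<dots> = (\<Sum>l<q. f l * (\<Sum>j<q. g (sb j l) * h (sb i j)))"
    by (simp add: sum_distrib_left)
  also have "\<dots> = (\<Sum>l<q. f l * (\<Sum>m<q. g m * h (sb (sb i l) m)))"
    by (simp add: inner)
  also have "\<dots> mod int q = (\<Sum>l<q. f l * rmul q g h (sb i l)) mod int q"
    by (rule sum_mod_cong) (simp add: rmul_at sb_lt mod_mult_right_eq)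
  also have "\<dots> = rmul q f (rmul q g h) i" using i by (simp add: rmul_at)
  finally show "rmul q (rmul q f g) h i = rmul q f (rmul q g h) i" .
qed

lemma one_mod: "1 mod int q = 1" using q1 by simp

lemma rone_mul: "f \<in> rcarrier q \<Longrightarrow> rmul q (rone q) f = f"
proof (rule rc_ext[OF rmul_rc])
  fix i assume f: "f \<in> rcarrier q" and i: "i < q"
  have "(\<Sum>j<q. rone q j * f (sb i j)) = (\<Sum>j<q. if j = 0 then f i else 0)"
    by (rule sum.cong) (auto simp: rone_def one_mod sb_0 i)
  also have "\<dots> = f i" using q0 by simp
  finally show "rmul q (rone q) f i = f i" using i f by (simp add: rmul_at rc_mod)
qed

lemma radd_assoc: "radd q (radd q f g) h = radd q f (radd q g h)"
  by (rule ext) (simp add: radd_def mod_add_left_eq mod_add_right_eq add.assoc)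

lemma radd_comm: "radd q f g = radd q g f"
  by (rule ext) (simp add: radd_def add.commute)

lemma radd_lcomm: "radd q f (radd q g h) = radd q g (radd q f h)"
  by (metis radd_assoc radd_comm)

lemma rzero_add: "f \<in> rcarrier q \<Longrightarrow> radd q rzero f = f"
  by (rule ext) (auto simp: radd_def rzero_def rc_mod rc_out)

lemma rneg_add: "radd q (rneg q f) f = rzero"
  by (rule ext) (simp add: radd_def rneg_def rzero_def mod_add_left_eq)

lemma rdistr: "rmul q (radd q f g) h = radd q (rmul q f h) (rmul q g h)"
proof (rule rc_ext[OF rmul_rc radd_rc])
  fix i assume i: "i < q"
  have "rmul q (radd q f g) h i = (\<Sum>j<q. radd q f g j * h (sb i j)) mod int q"
    using i by (rule rmul_at)
  also have "\<dots> = (\<Sum>j<q. (f j + g j) * h (sb i j)) mod int q"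
    by (rule sum_mod_cong) (simp add: radd_def mod_mult_left_eq)
  also have "(\<Sum>j<q. (f j + g j) * h (sb i j)) = (\<Sum>j<q. f j * h (sb i j)) + (\<Sum>j<q. g j * h (sb i j))"
    by (simp add: sum.distrib distrib_right)
  also have "\<dots> mod int q = radd q (rmul q f h) (rmul q g h) i"
  proof -
    have "radd q (rmul q f h) (rmul q g h) i = (rmul q f h i + rmul q g h i) mod int q"
      using i by (simp add: radd_def)
    also have "\<dots> = ((\<Sum>j<q. f j * h (sb i j)) mod int q + (\<Sum>j<q. g j * h (sb i j)) mod int q) mod int q"
      using i by (simp only: rmul_at)
    finally show ?thesis by (simp add: mod_add_eq)
  qed
  finally show "rmul q (radd q f g) h i = radd q (rmul q f h) (rmul q g h) i" .
qed

definition RR :: "relt ring" where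
  "RR = \<lparr>carrier = rcarrier q, mult = rmul q, one = rone q, zero = rzero, add = radd q\<rparr>"

lemma RR_carrier[simp]: "carrier RR = rcarrier q"
  by (simp add: RR_def)

lemma RR_simps: "carrier RR = rcarrier q" "mult RR = rmul q" "one RR = rone q"
  "zero RR = rzero" "add RR = radd q"
  by (simp_all add: RR_def)

lemma cring_RR: "cring RR"
proof (rule cringI)
  show "abelian_group RR"
  proof (rule abelian_groupI)
    show "\<exists>y\<in>carrier RR. y \<oplus>\<^bsub>RR\<^esub> x = \<zero>\<^bsub>RR\<^esub>" for x
      using rneg_add[of x] rneg_rc[of x] by (auto simp: RR_simps)
  qed (auto simp: RR_simps radd_assoc rzero_add intro: radd_comm)
  show "comm_monoid RR"
    by (rule comm_monoidI) (auto simp: RR_simps rmul_assoc rone_mul intro: rmul_comm)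
qed (simp add: RR_simps rdistr)

end

sublocale qr \<subseteq> R: cring RR by (rule cring_RR)

context qr begin
lemma ainv_eq: "f \<in> rcarrier q \<Longrightarrow> \<ominus>\<^bsub>RR\<^esub> f = rneg q f"
  using R.minus_equality[of "rneg q f" f] rneg_add[of f] by (simp add: RR_simps)
lemma RR_one_rc[simp]: "\<one>\<^bsub>RR\<^esub> \<in> rcarrier q" by (simp add: RR_simps)
lemma RR_zero_rc[simp]: "\<zero>\<^bsub>RR\<^esub> \<in> rcarrier q" by (simp add: RR_simps)
lemma RR_mult_rc[simp]: "x \<otimes>\<^bsub>RR\<^esub> y \<in> rcarrier q" by (simp add: RR_simps)
lemma RR_add_rc[simp]: "x \<oplus>\<^bsub>RR\<^esub> y \<in> rcarrier q" by (simp add: RR_simps)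
lemma RR_inv_rc[simp]: "x \<in> rcarrier q \<Longrightarrow> \<ominus>\<^bsub>RR\<^esub> x \<in> rcarrier q" by (simp add: ainv_eq)
lemma RR_minus_rc[simp]: "x \<ominus>\<^bsub>RR\<^esub> y \<in> rcarrier q" by (simp add: a_minus_def)
lemma RR_pow_rc[simp]: "x \<in> rcarrier q \<Longrightarrow> x [^]\<^bsub>RR\<^esub> (n::nat) \<in> rcarrier q"
  using R.nat_pow_closed by simp
end

context qr begin

lemma gam_at: "j < q \<Longrightarrow> gam q j = (if j = 1 then 1 else 0)"
  using q1 by (simp add: gam_def one_mod)

lemma gam_mul_at: "f \<in> rcarrier q \<Longrightarrow> i < q \<Longrightarrow> rmul q (gam q) f i = f (sb i 1)"
proof -
  assume f: "f \<in> rcarrier q" and i: "i < q"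
  have "(\<Sum>j<q. gam q j * f (sb i j)) = (\<Sum>j<q. if j = 1 then f (sb i 1) else 0)"
    by (rule sum.cong) (auto simp: gam_at)
  also have "\<dots> = f (sb i 1)" using q1 by simp
  finally show ?thesis using i f by (simp add: rmul_at rc_mod)
qed

lemma gm1_eq: "gm1 q = gam q \<ominus>\<^bsub>RR\<^esub> \<one>\<^bsub>RR\<^esub>"
  by (simp add: gm1_def a_minus_def ainv_eq RR_simps)

lemma gm1_rc[simp]: "gm1 q \<in> rcarrier q"
  by (simp add: gm1_def)

lemma gm1_mul_at: "f \<in> rcarrier q \<Longrightarrow> i < q \<Longrightarrow> rmul q (gm1 q) f i = (f (sb i 1) - f i) mod int q"
proof -
  assume f: "f \<in> rcarrier q" and i: "i < q"
  have "rmul q (gm1 q) f = radd q (rmul q (gam q) f) (rneg q f)"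
  proof -
    have "(gam q \<ominus>\<^bsub>RR\<^esub> \<one>\<^bsub>RR\<^esub>) \<otimes>\<^bsub>RR\<^esub> f = gam q \<otimes>\<^bsub>RR\<^esub> f \<oplus>\<^bsub>RR\<^esub> (\<ominus>\<^bsub>RR\<^esub> f)"
      using f R.l_distr[of "gam q" "\<ominus>\<^bsub>RR\<^esub> \<one>\<^bsub>RR\<^esub>" f] R.l_minus[of "\<one>\<^bsub>RR\<^esub>" f]
      by (simp add: a_minus_def)
    then show ?thesis using f by (simp add: ainv_eq RR_simps gm1_eq)
  qed
  then show ?thesis using f i
    by (simp add: radd_def rneg_def gam_mul_at sb_lt mod_add_right_eq)
qed

lemma Nrm_mul_at: "i < q \<Longrightarrow> rmul q (Nrm q) f i = (\<Sum>j<q. f j) mod int q"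
proof -
  assume i: "i < q"
  have "(\<Sum>j<q. Nrm q j * f (sb i j)) mod int q = (\<Sum>j<q. f (sb i j)) mod int q"
    by (rule sum_mod_cong) (simp add: Nrm_def one_mod)
  also have "(\<Sum>j<q. f (sb i j)) = (\<Sum>j<q. f j)"
    by (rule sum.reindex_bij_witness[where i="sb i" and j="sb i"]) (auto simp: sb_invol sb_lt i)
  finally show ?thesis using i by (simp add: rmul_at)
qed

lemma rpow_eq: "rpow q f m = f [^]\<^bsub>RR\<^esub> m"
  by (induction m) (simp_all add: RR_simps)

lemma rpow_gam: "rpow q (gam q) m = (\<lambda>i. if i = m mod q then 1 else 0)"
proof (induction m)
  case 0
  show ?case by (rule ext) (simp add: rone_def one_mod)
next
  case (Suc m)
  have rc: "(\<lambda>i. if i = m mod q then 1 else 0) \<in> rcarrier q"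
    by (rule rcI) (auto simp: one_mod q0 dest: le_less_trans[OF _ mod_less_divisor[OF q0]])
  have rc2: "(\<lambda>i. if i = Suc m mod q then 1 else 0) \<in> rcarrier q"
    by (rule rcI) (auto simp: one_mod q0 dest: le_less_trans[OF _ mod_less_divisor[OF q0]])
  have "rpow q (gam q) (Suc m) = rmul q (gam q) (\<lambda>i. if i = m mod q then 1 else 0)"
    using Suc by (simp add: rmul_comm)
  also have "\<dots> = (\<lambda>i. if i = Suc m mod q then 1 else 0)"
  proof (rule rc_ext[OF rmul_rc rc2])
    fix i assume i: "i < q"
    have "m mod q < q" using q0 by simp
    then have "(sb i 1 = m mod q) = (i = Suc m mod q)"
      using i q1 by (auto simp: sb_eq mod_Suc)
    then show "rmul q (gam q) (\<lambda>i. if i = m mod q then 1 else 0) i = (if i = Suc m mod q then 1 else 0)"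
      using i rc by (simp add: gam_mul_at)
  qed
  finally show ?case .
qed

lemma rsumn_at: "rsumn q F m = (\<lambda>i. if i < q then (\<Sum>l<m. F l i) mod int q else 0)"
proof (induction m)
  case 0 show ?case by (rule ext) (simp add: rzero_def)
next
  case (Suc m) show ?case
    by (rule ext) (simp add: Suc radd_def mod_add_left_eq)
qed

definition cD :: "nat \<Rightarrow> nat \<Rightarrow> int" where "cD j m = (-1)^j * int (m choose j)"

lemma Dop_eq: "Dop q j = (\<lambda>e. if e + j < q then cD j (e + j) mod int q else 0)"
proof (rule ext)
  fix e
  show "Dop q j e = (if e + j < q then cD j (e + j) mod int q else 0)"
  proof (cases "e < q")
    case False then show ?thesis by (simp add: Dop_def rsumn_at)
  next
    case e: True
    have "Dop q j e = (\<Sum>i<q. rscal q (cD j i) (rpow q (gam q) (i - j)) e) mod int q"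
      using e by (simp add: Dop_def rsumn_at cD_def)
    also have "\<dots> = (\<Sum>i<q. if i = e + j then cD j i else 0) mod int q"
    proof (rule sum_mod_cong)
      fix i assume "i \<in> {..<q}"
      then have i: "i < q" by simp
      show "rscal q (cD j i) (rpow q (gam q) (i - j)) e mod int q = (if i = e + j then cD j i else 0) mod int q"
      proof (cases "i < j")
        case True then show ?thesis using e by (auto simp: rscal_def rpow_gam cD_def binomial_eq_0)
      next
        case False
        then have "(e = (i - j) mod q) = (i = e + j)" using i by auto
        then show ?thesis using e by (auto simp: rscal_def rpow_gam)
      qed
    qed
    also have "(\<Sum>i<q. if i = e + j then cD j i else 0) = (if e + j < q then cD j (e + j) else 0)"
      by simp
    finally show ?thesis by simp
  qed
qed

lemma Dop_rc[simp]: "Dop q j \<in> rcarrier q"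
  by (simp add: Dop_def rsumn_at) (rule rcI, auto)

lemma Dop0: "Dop q 0 = Nrm q"
  by (rule ext) (simp add: Dop_eq Nrm_def cD_def)

lemma gm1_Dop:
  assumes dv: "int q dvd int (q choose Suc j)" and jq: "Suc j < q"
  shows "rmul q (gm1 q) (Dop q (Suc j)) = Dop q j"
proof (rule rc_ext[OF rmul_rc Dop_rc])
  fix e assume e: "e < q"
  have pas: "cD (Suc j) (Suc m) = cD (Suc j) m - cD j m" for m
    by (simp add: cD_def algebra_simps)
  have G: "rmul q (gm1 q) (Dop q (Suc j)) e = (Dop q (Suc j) (sb e 1) - Dop q (Suc j) e) mod int q"
    by (rule gm1_mul_at[OF Dop_rc e])
  show "rmul q (gm1 q) (Dop q (Suc j)) e = Dop q j e"
  proof (cases "e = 0")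
    case True
    have "sb 0 1 = q - 1" using q1 by (simp add: sb_eq)
    then show ?thesis using True jq q1 unfolding G
      by (simp add: Dop_eq cD_def mod_diff_right_eq mod_minus_eq)
  next
    case False
    then obtain e' where e': "e = Suc e'" by (cases e) auto
    have sbe: "sb e 1 = e'" using e e' by (simp add: sb_eq)
    have "rmul q (gm1 q) (Dop q (Suc j)) e = (Dop q (Suc j) e' - Dop q (Suc j) e) mod int q"
      unfolding G sbe ..
    also have "\<dots> = Dop q j e"
    proof (cases "e + Suc j < q")
      case True
      then show ?thesis using e'
        by (simp add: Dop_eq mod_diff_eq pas)
    next
      case F: False
      show ?thesis
      proof (cases "e + Suc j = q")
        case True
        have key: "(cD (Suc j) (e' + Suc j)) mod int q = cD j (e + j) mod int q"
        proof -
          have qq: "q = Suc (e' + Suc j) " using True e' by simp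
          have "cD (Suc j) (Suc (e' + Suc j)) = cD (Suc j) (e' + Suc j) - cD j (e' + Suc j)" by (rule pas)
          moreover have "int q dvd cD (Suc j) (Suc (e' + Suc j))"
            using dv qq by (simp add: cD_def)
          ultimately have "int q dvd cD (Suc j) (e' + Suc j) - cD j (e' + Suc j)" by simp
          then show ?thesis using e' by (simp add: mod_eq_dvd_iff)
        qed
        show ?thesis using True e' key F by (simp add: Dop_eq mod_diff_left_eq)
      next
        case False
        then show ?thesis using F e' by (simp add: Dop_eq)
      qed
    qed
    finally show ?thesis .
  qed
qed

end

context qr begin

abbreviation uu where "uu \<equiv> gm1 q"
abbreviation mm (infixl "\<star>" 70) where "x \<star> y \<equiv> x \<otimes>\<^bsub>RR\<^esub> y"
abbreviation pp (infixl "\<oplus>\<oplus>" 65) where "x \<oplus>\<oplus> y \<equiv> x \<oplus>\<^bsub>RR\<^esub> y"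
abbreviation zz where "zz \<equiv> \<zero>\<^bsub>RR\<^esub>"
abbreviation upow where "upow k \<equiv> gm1 q [^]\<^bsub>RR\<^esub> (k::nat)"

lemma mm_eq: "x \<star> y = rmul q x y" by (simp add: RR_simps)
lemma zz_eq: "zz = rzero" by (simp add: RR_simps)

lemma mod_eq_rc: "a mod int q = a \<Longrightarrow> b mod int q = b \<Longrightarrow> (a - b) mod int q = 0 \<Longrightarrow> a = b"
  by (metis mod_eq_dvd_iff mod_0 dvd_eq_mod_eq_0)

lemma Ann_u:
  assumes f: "f \<in> rcarrier q" and z: "uu \<star> f = zz"
  shows "\<exists>c\<in>rcarrier q. f = Nrm q \<star> c"
proof -
  have st: "f (sb e 1) = f e" if e: "e < q" for e
  proof -
    have "rmul q uu f e = 0" using z by (simp add: mm_eq zz_eq rzero_def)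
    then have "(f (sb e 1) - f e) mod int q = 0" using gm1_mul_at[OF f e] by simp
    then show ?thesis using f by (auto intro: mod_eq_rc simp: rc_mod)
  qed
  have const: "e < q \<Longrightarrow> f e = f 0" for e
  proof (induction e)
    case (Suc e)
    have "sb (Suc e) 1 = e" using Suc.prems by (simp add: sb_eq)
    then show ?case using st[OF Suc.prems] Suc by simp
  qed simp
  define c :: relt where "c = (\<lambda>i. if i = 0 then f 0 else 0)"
  have crc: "c \<in> rcarrier q"
    using f q0 by (intro rcI) (auto simp: c_def rc_mod)
  have "f = rmul q (Nrm q) c"
  proof (rule rc_ext[OF f rmul_rc])
    fix i assume i: "i < q"
    have "(\<Sum>j<q. c j) = f 0" using q0 by (simp add: c_def)
    then show "f i = rmul q (Nrm q) c i" using i const[OF i] f q0 by (simp add: Nrm_mul_at rc_mod)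
  qed
  then show ?thesis using crc by (auto simp: mm_eq)
qed

lemma aug_u:
  assumes f: "f \<in> augI q"
  shows "\<exists>g\<in>rcarrier q. f = uu \<star> g"
proof -
  have frc: "f \<in> rcarrier q" and fs: "(\<Sum>i<q. f i) mod int q = 0" using f by (auto simp: augI_def)
  define g where "g = (\<lambda>e. if e < q then (- (\<Sum>m\<le>e. f m)) mod int q else 0)"
  have grc: "g \<in> rcarrier q" by (rule rcI) (auto simp: g_def)
  have "f = rmul q uu g"
  proof (rule rc_ext[OF frc rmul_rc])
    fix e assume e: "e < q"
    show "f e = rmul q uu g e"
    proof (cases e)
      case 0
      have s1: "sb 0 1 = q - 1" using q1 by (simp add: sb_eq)
      have at: "{..q - 1} = {..<q}" using q0 by auto
      have "rmul q uu g e = ((- (\<Sum>m<q. f m)) mod int q - (- f 0) mod int q) mod int q"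
        using gm1_mul_at[OF grc e] 0 s1 q0 at by (simp add: g_def)
      also have "\<dots> = (- (\<Sum>m<q. f m) + f 0) mod int q"
        by (simp add: mod_diff_eq)
      also have "\<dots> = ((- (\<Sum>m<q. f m)) mod int q + f 0) mod int q"
        by (simp add: mod_add_left_eq)
      also have "(- (\<Sum>m<q. f m)) mod int q = 0" using fs by (simp add: zmod_zminus1_eq_if)
      finally show ?thesis using 0 frc by (simp add: rc_mod)
    next
      case (Suc e')
      have s1: "sb e 1 = e'" using Suc e by (simp add: sb_eq)
      have "rmul q uu g e = ((- (\<Sum>m\<le>e'. f m)) mod int q - (- (\<Sum>m\<le>Suc e'. f m)) mod int q) mod int q"
        using gm1_mul_at[OF grc e] Suc s1 e by (simp add: g_def)
      also have "\<dots> = f e mod int q" by (simp add: mod_diff_eq Suc)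
      finally show ?thesis using frc by (simp add: rc_mod)
    qed
  qed
  then show ?thesis using grc by (auto simp: mm_eq)
qed

lemma Ann_N:
  assumes f: "f \<in> rcarrier q" and z: "Nrm q \<star> f = zz"
  shows "f \<in> augI q"
proof -
  have "rmul q (Nrm q) f 0 = 0" using z by (simp add: mm_eq zz_eq rzero_def)
  then show ?thesis using f q0 Nrm_mul_at[of 0 f] by (simp add: augI_def)
qed

lemma u_aug: "uu \<in> augI q"
proof -
  have "(\<Sum>i<q. gm1 q i) mod int q = (\<Sum>i<q. gam q i - rone q i) mod int q"
    by (rule sum_mod_cong) (simp add: gm1_def radd_def rneg_def mod_add_right_eq)
  also have "(\<Sum>i<q. gam q i - rone q i) = (\<Sum>i<q. gam q i) - (\<Sum>i<q. rone q i)"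
    by (simp add: sum_subtractf)
  also have "(\<Sum>i<q. gam q i) = 1"
  proof -
    have "(\<Sum>i<q. gam q i) = (\<Sum>i<q. if i = 1 then 1 else 0)" by (rule sum.cong) (auto simp: gam_at)
    then show ?thesis using q1 by simp
  qed
  also have "(\<Sum>i<q. rone q i) = 1"
    using q0 by (simp add: rone_def one_mod)
  finally show ?thesis by (simp add: augI_def)
qed

definition UU :: "nat \<Rightarrow> relt set" where "UU k = {upow k \<star> c | c. c \<in> rcarrier q}"

lemma UU_rc: "x \<in> UU k \<Longrightarrow> x \<in> rcarrier q" by (auto simp: UU_def)

lemma Ipow_eq: "Ipow q k = UU k"
proof (induction k)
  case 0
  show ?case
  proof
    show "Ipow q 0 \<subseteq> UU 0"
      by (auto simp: UU_def intro!: exI[of _ "_"])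
    show "UU 0 \<subseteq> Ipow q 0" by (auto simp: UU_def)
  qed
next
  case (Suc k)
  show ?case
  proof
    show "Ipow q (Suc k) \<subseteq> UU (Suc k)"
    proof
      fix x assume "x \<in> Ipow q (Suc k)"
      then have "x \<in> iprod q (augI q) (UU k)" using Suc by simp
      then show "x \<in> UU (Suc k)"
      proof (induction rule: iprod.induct)
        case iprod_zero
        have "rzero = upow (Suc k) \<star> zz" by (simp add: zz_eq[symmetric] gm1_rc)
        then show ?case unfolding UU_def using RR_zero_rc by blast
      next
        case (iprod_mul a b)
        obtain a' where a': "a' \<in> rcarrier q" "a = uu \<star> a'" using aug_u[OF iprod_mul(1)] by blast
        obtain b' where b': "b' \<in> rcarrier q" "b = upow k \<star> b'" using iprod_mul(2) by (auto simp: UU_def)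
        have "rmul q a b = upow (Suc k) \<star> (a' \<star> b')"
          unfolding mm_eq[symmetric] a' b' using a' b' gm1_rc
          by (simp add: R.m_ac)
        then show ?case using a' b' by (auto simp: UU_def)
      next
        case (iprod_add x y)
        obtain a' where a': "a' \<in> rcarrier q" "x = upow (Suc k) \<star> a'" using iprod_add(3) by (auto simp: UU_def)
        obtain b' where b': "b' \<in> rcarrier q" "y = upow (Suc k) \<star> b'" using iprod_add(4) by (auto simp: UU_def)
        have "radd q x y = upow (Suc k) \<star> (a' \<oplus>\<oplus> b')"
          using a' b' by (simp add: R.r_distr RR_simps(5)[symmetric])
        then show ?case using a' b' by (auto simp: UU_def)
      qed
    qed
    show "UU (Suc k) \<subseteq> Ipow q (Suc k)"
    proof
      fix x assume "x \<in> UU (Suc k)"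
      then obtain c where c: "c \<in> rcarrier q" "x = upow (Suc k) \<star> c" by (auto simp: UU_def)
      have "x = rmul q uu (upow k \<star> c)"
        using c by (simp add: mm_eq[symmetric] R.m_ac)
      moreover have "upow k \<star> c \<in> Ipow q k" using Suc c by (auto simp: UU_def)
      ultimately show "x \<in> Ipow q (Suc k)" using u_aug by (simp add: iprod.iprod_mul)
    qed
  qed
qed

end

context qr begin

definition hyp :: "nat \<Rightarrow> bool" where
  "hyp J \<longleftrightarrow> J < q \<and> (\<forall>j. 1 \<le> j \<longrightarrow> j \<le> J \<longrightarrow> int q dvd int (q choose j))"

lemma uD: "hyp J \<Longrightarrow> Suc j \<le> J \<Longrightarrow> uu \<star> Dop q (Suc j) = Dop q j"
  unfolding hyp_def mm_eq by (rule gm1_Dop) auto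

lemma upowD: "hyp J \<Longrightarrow> j \<le> J \<Longrightarrow> upow j \<star> Dop q j = Nrm q"
proof (induction j)
  case 0
  show ?case by (simp add: Dop0)
next
  case (Suc j)
  have "upow (Suc j) \<star> Dop q (Suc j) = upow j \<star> (uu \<star> Dop q (Suc j))"
    by (simp add: R.m_assoc)
  also have "\<dots> = upow j \<star> Dop q j" using uD[OF Suc.prems(1)] Suc.prems(2) by simp
  finally show ?case using Suc by simp
qed

lemma AnnU:
  assumes H: "hyp JJ"
  shows "J \<le> JJ \<Longrightarrow> f \<in> rcarrier q \<Longrightarrow> upow (Suc J) \<star> f = zz \<Longrightarrow> \<exists>c\<in>rcarrier q. f = Dop q J \<star> c"
proof (induction J arbitrary: f)
  case 0
  have "uu \<star> f = zz" using 0 by simp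
  then show ?case using Ann_u[of f] 0 by (simp add: Dop0)
next
  case (Suc J)
  note f = Suc.prems(2)
  have "upow (Suc J) \<star> (uu \<star> f) = zz"
    using Suc.prems(3) f by (simp add: R.m_assoc)
  then obtain a where a: "a \<in> rcarrier q" "uu \<star> f = Dop q J \<star> a"
    using Suc.IH[of "uu \<star> f"] Suc.prems by auto
  have DJ: "Dop q J = uu \<star> Dop q (Suc J)" using uD[OF H] Suc.prems by simp
  define g where "g = f \<ominus>\<^bsub>RR\<^esub> Dop q (Suc J) \<star> a"
  have grc: "g \<in> rcarrier q" by (simp add: g_def)
  have "uu \<star> g = uu \<star> f \<ominus>\<^bsub>RR\<^esub> (uu \<star> Dop q (Suc J)) \<star> a"
    using f a by (simp add: g_def a_minus_def R.r_distr R.r_minus R.m_assoc)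
  also have "\<dots> = zz" using a DJ by (simp add: a_minus_def R.r_neg)
  finally obtain b where b: "b \<in> rcarrier q" "g = Nrm q \<star> b" using Ann_u[OF grc] by auto
  have N: "Nrm q = Dop q (Suc J) \<star> upow (Suc J)"
    using upowD[OF H, of "Suc J"] Suc.prems by (simp add: R.m_comm)
  have "f = g \<oplus>\<oplus> Dop q (Suc J) \<star> a"
    using f a by (simp add: g_def a_minus_def R.a_assoc R.l_neg)
  also have "\<dots> = Dop q (Suc J) \<star> (upow (Suc J) \<star> b \<oplus>\<oplus> a)"
    using a b by (simp add: N R.m_assoc R.r_distr)
  finally show ?case using a b by auto
qed

lemma AnnD:
  assumes H: "hyp JJ"
  shows "J \<le> JJ \<Longrightarrow> f \<in> rcarrier q \<Longrightarrow> Dop q J \<star> f = zz \<Longrightarrow> \<exists>c\<in>rcarrier q. f = upow (Suc J) \<star> c"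
proof (induction J arbitrary: f)
  case 0
  have "f \<in> augI q" using Ann_N[of f] 0 by (simp add: Dop0)
  then obtain g where "g \<in> rcarrier q" "f = uu \<star> g" using aug_u by blast
  then show ?case by auto
next
  case (Suc J)
  note f = Suc.prems(2)
  have DJ: "Dop q J = uu \<star> Dop q (Suc J)" using uD[OF H] Suc.prems by simp
  have "Dop q J \<star> f = uu \<star> (Dop q (Suc J) \<star> f)" using f by (simp add: DJ R.m_assoc)
  also have "\<dots> = zz" using Suc.prems by simp
  finally obtain a where a: "a \<in> rcarrier q" "f = upow (Suc J) \<star> a"
    using Suc.IH[of f] Suc.prems by auto
  have N: "upow (Suc J) \<star> Dop q (Suc J) = Nrm q"
    using upowD[OF H, of "Suc J"] Suc.prems by simp
  have "Nrm q \<star> a = Dop q (Suc J) \<star> f"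
    using a by (simp add: N[symmetric] R.m_ac)
  then have "Nrm q \<star> a = zz" using Suc.prems by simp
  then have "a \<in> augI q" using Ann_N a by simp
  then obtain b where b: "b \<in> rcarrier q" "a = uu \<star> b" using aug_u by blast
  have "f = upow (Suc (Suc J)) \<star> b" using a b by (simp add: R.m_assoc)
  then show ?case using b by auto
qed

end

declare rsumn.simps[simp del]

context qr begin

lemma rsumn_0: "rsumn q F 0 = zz" by (simp add: zz_eq rsumn.simps)
lemma rsumn_Suc: "rsumn q F (Suc m) = rsumn q F m \<oplus>\<oplus> F m" by (simp add: RR_simps rsumn.simps)
lemma rsumn_rc[simp]: "rsumn q F m \<in> rcarrier q" by (cases m) (auto simp: rsumn_0 rsumn_Suc)

lemma rsumn_cong: "(\<And>l. l < m \<Longrightarrow> F l = G l) \<Longrightarrow> rsumn q F m = rsumn q G m"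
  by (induction m) (auto simp: rsumn_Suc rsumn_0)

lemma rsumn_add:
  "(\<And>l. l < m \<Longrightarrow> F l \<in> rcarrier q) \<Longrightarrow> (\<And>l. l < m \<Longrightarrow> G l \<in> rcarrier q) \<Longrightarrow>
   rsumn q (\<lambda>l. F l \<oplus>\<oplus> G l) m = rsumn q F m \<oplus>\<oplus> rsumn q G m"
proof (induction m)
  case 0 show ?case by (simp add: rsumn_0)
next
  case (Suc m)
  then show ?case by (simp add: rsumn_Suc R.a_ac)
qed

lemma rsumn_lmul:
  "r \<in> rcarrier q \<Longrightarrow> (\<And>l. l < m \<Longrightarrow> F l \<in> rcarrier q) \<Longrightarrow>
   r \<star> rsumn q F m = rsumn q (\<lambda>l. r \<star> F l) m"
proof (induction m)
  case 0 show ?case using 0 by (simp add: rsumn_0)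
next
  case (Suc m)
  then show ?case by (simp add: rsumn_Suc R.r_distr)
qed

lemma rsumn_rmul:
  "r \<in> rcarrier q \<Longrightarrow> (\<And>l. l < m \<Longrightarrow> F l \<in> rcarrier q) \<Longrightarrow>
   rsumn q F m \<star> r = rsumn q (\<lambda>l. F l \<star> r) m"
proof -
  assume r: "r \<in> rcarrier q" and F: "\<And>l. l < m \<Longrightarrow> F l \<in> rcarrier q"
  have "rsumn q (\<lambda>l. r \<star> F l) m = rsumn q (\<lambda>l. F l \<star> r) m"
    by (rule rsumn_cong) (simp add: R.m_comm r F)
  then show ?thesis using rsumn_lmul[of r m F] r F by (simp add: R.m_comm)
qed

lemma rsumn_swap:
  "(\<And>i j. i < b \<Longrightarrow> j < a \<Longrightarrow> F i j \<in> rcarrier q) \<Longrightarrow>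
   rsumn q (\<lambda>i. rsumn q (\<lambda>j. F i j) a) b = rsumn q (\<lambda>j. rsumn q (\<lambda>i. F i j) b) a"
proof (induction b)
  case 0 show ?case by (simp add: rsumn_0) (induction a, simp_all add: rsumn_Suc rsumn_0)
next
  case (Suc b)
  have "rsumn q (\<lambda>j. rsumn q (\<lambda>i. F i j) (Suc b)) a = rsumn q (\<lambda>j. rsumn q (\<lambda>i. F i j) b \<oplus>\<oplus> F b j) a"
    by (simp add: rsumn_Suc)
  also have "\<dots> = rsumn q (\<lambda>j. rsumn q (\<lambda>i. F i j) b) a \<oplus>\<oplus> rsumn q (F b) a"
    using Suc.prems by (intro rsumn_add) auto
  finally show ?case using Suc by (simp add: rsumn_Suc)
qed

lemma UU_zero: "zz \<in> UU k"
  unfolding UU_def using R.r_null[of "upow k"] RR_zero_rc by (metis (mono_tags, lifting) CollectI R.nat_pow_closed RR_carrier gm1_rc)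

lemma UU_add: "x \<in> UU k \<Longrightarrow> y \<in> UU k \<Longrightarrow> x \<oplus>\<oplus> y \<in> UU k"
proof -
  assume "x \<in> UU k" "y \<in> UU k"
  then obtain c d where "c \<in> rcarrier q" "d \<in> rcarrier q" "x = upow k \<star> c" "y = upow k \<star> d"
    unfolding UU_def by auto
  then have "x \<oplus>\<oplus> y = upow k \<star> (c \<oplus>\<oplus> d)" by (simp add: R.r_distr)
  then show ?thesis unfolding UU_def by auto
qed

lemma UU_mul: "x \<in> UU k \<Longrightarrow> r \<in> rcarrier q \<Longrightarrow> x \<star> r \<in> UU k"
proof -
  assume "x \<in> UU k" and r: "r \<in> rcarrier q"
  then obtain c where c: "c \<in> rcarrier q" "x = upow k \<star> c"
    unfolding UU_def by auto
  then have "x \<star> r = upow k \<star> (c \<star> r)" using r by (simp add: R.m_assoc)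
  then show ?thesis unfolding UU_def by auto
qed

lemma UU_mul2: "x \<in> UU k \<Longrightarrow> r \<in> rcarrier q \<Longrightarrow> r \<star> x \<in> UU k"
  using UU_mul[of x k r] UU_rc[of x k] by (simp add: R.m_comm)

lemma UU_u: "x \<in> UU k \<Longrightarrow> uu \<star> x \<in> UU (Suc k)"
proof -
  assume "x \<in> UU k"
  then obtain c where c: "c \<in> rcarrier q" "x = upow k \<star> c"
    unfolding UU_def by auto
  then have "uu \<star> x = upow (Suc k) \<star> c" by (simp add: R.m_ac)
  then show ?thesis unfolding UU_def using c by auto
qed

lemma UU_neg: "x \<in> UU k \<Longrightarrow> \<ominus>\<^bsub>RR\<^esub> x \<in> UU k"
proof -
  assume "x \<in> UU k"
  then obtain c where c: "c \<in> rcarrier q" "x = upow k \<star> c"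
    unfolding UU_def by auto
  then have "\<ominus>\<^bsub>RR\<^esub> x = upow k \<star> (\<ominus>\<^bsub>RR\<^esub> c)" by (simp add: R.r_minus)
  then show ?thesis unfolding UU_def using c by auto
qed

lemma rsumn_UU: "(\<And>l. l < m \<Longrightarrow> F l \<in> UU k) \<Longrightarrow> rsumn q F m \<in> UU k"
  by (induction m) (auto simp: rsumn_0 rsumn_Suc UU_zero UU_add)

lemma upow_UU: "upow k \<in> UU k"
  unfolding UU_def by (auto intro!: exI[of _ "\<one>\<^bsub>RR\<^esub>"])

end

context qr begin

definition Mok :: "nat \<Rightarrow> nat \<Rightarrow> (nat \<Rightarrow> nat \<Rightarrow> relt) \<Rightarrow> bool" where
  "Mok a b M \<longleftrightarrow> (\<forall>i<b. \<forall>j<a. M i j \<in> rcarrier q)"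

lemma MokD: "Mok a b M \<Longrightarrow> i < b \<Longrightarrow> j < a \<Longrightarrow> M i j \<in> rcarrier q"
  unfolding Mok_def by auto

lemma Mok_t: "Mok a b M \<Longrightarrow> Mok b a (\<lambda>j i. M i j)"
  unfolding Mok_def by auto

lemma ellstar_t: "ellstar q a b M = ell q b a (\<lambda>j i. M i j)"
  by (intro ext) (simp add: ellstar_def ell_def)

lemma Tsub_t: "Tsub q a b M = Ssub q b a (\<lambda>j i. M i j)"
  by (simp add: Tsub_def Ssub_def ellstar_t)

lemma T0k_t: "T0k q a b M k = S0k q b a (\<lambda>j i. M i j) k"
  by (simp add: T0k_def S0k_def Tsub_t)

lemma vc_rc: "x \<in> vcarrier q m \<Longrightarrow> x j \<in> rcarrier q"
  unfolding vcarrier_def by (cases "j < m") auto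

lemma vc_out: "x \<in> vcarrier q m \<Longrightarrow> m \<le> j \<Longrightarrow> x j = rzero"
  unfolding vcarrier_def by auto

lemma vcI: "(\<And>j. j < m \<Longrightarrow> x j \<in> rcarrier q) \<Longrightarrow> (\<And>j. m \<le> j \<Longrightarrow> x j = rzero) \<Longrightarrow> x \<in> vcarrier q m"
  unfolding vcarrier_def by auto

lemma rmul_rzero: "rmul q r rzero = rzero"
  by (rule ext) (simp add: rmul_def rzero_def)

lemma radd_rzero: "radd q rzero rzero = rzero"
  by (rule ext) (simp add: radd_def rzero_def)

lemma ell_at: "i < b \<Longrightarrow> ell q a b M x i = rsumn q (\<lambda>j. M i j \<star> x j) a"
  by (simp add: ell_def mm_eq)

lemma ell_vc: "ell q a b M x \<in> vcarrier q b"
  by (rule vcI) (auto simp: ell_def)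

lemma smul_vc: "v \<in> vcarrier q m \<Longrightarrow> smul q r v \<in> vcarrier q m"
  by (rule vcI) (auto simp: smul_def vc_out rmul_rzero)

lemma vadd_vc: "v \<in> vcarrier q m \<Longrightarrow> w \<in> vcarrier q m \<Longrightarrow> vadd q v w \<in> vcarrier q m"
  by (rule vcI) (auto simp: vadd_def vc_out radd_rzero)

lemma vzero_vc: "vzero \<in> vcarrier q m"
  by (rule vcI) (auto simp: vzero_def)

lemma ell_smul:
  assumes M: "Mok a b M" and x: "x \<in> vcarrier q a" and r: "r \<in> rcarrier q"
  shows "ell q a b M (smul q r x) = smul q r (ell q a b M x)"
proof (rule ext)
  fix i show "ell q a b M (smul q r x) i = smul q r (ell q a b M x) i"
  proof (cases "i < b")
    case True
    have "rsumn q (\<lambda>j. M i j \<star> smul q r x j) a = rsumn q (\<lambda>j. r \<star> (M i j \<star> x j)) a"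
      by (rule rsumn_cong) (simp add: smul_def mm_eq[symmetric] R.m_lcomm r MokD[OF M True] vc_rc[OF x])
    also have "\<dots> = r \<star> rsumn q (\<lambda>j. M i j \<star> x j) a"
      by (rule rsumn_lmul[symmetric]) (simp_all add: r)
    finally show ?thesis using True by (simp add: ell_at smul_def mm_eq)
  next
    case False then show ?thesis by (simp add: ell_def smul_def rmul_rzero)
  qed
qed

lemma ell_vadd:
  assumes M: "Mok a b M" and x: "x \<in> vcarrier q a" and y: "y \<in> vcarrier q a"
  shows "ell q a b M (vadd q x y) = vadd q (ell q a b M x) (ell q a b M y)"
proof (rule ext)
  fix i show "ell q a b M (vadd q x y) i = vadd q (ell q a b M x) (ell q a b M y) i"
  proof (cases "i < b")
    case True
    have "rsumn q (\<lambda>j. M i j \<star> vadd q x y j) a = rsumn q (\<lambda>j. M i j \<star> x j \<oplus>\<oplus> M i j \<star> y j) a"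
      by (rule rsumn_cong) (simp add: vadd_def RR_simps(5)[symmetric] R.r_distr MokD[OF M True] vc_rc[OF x] vc_rc[OF y])
    also have "\<dots> = rsumn q (\<lambda>j. M i j \<star> x j) a \<oplus>\<oplus> rsumn q (\<lambda>j. M i j \<star> y j) a"
      by (rule rsumn_add) simp_all
    finally show ?thesis using True by (simp add: ell_at vadd_def RR_simps(5))
  next
    case False then show ?thesis by (simp add: ell_def vadd_def radd_rzero)
  qed
qed

lemma rsumn_rzero: "rsumn q (\<lambda>_. rzero) m = rzero"
  by (induction m) (simp_all add: rsumn.simps radd_rzero)

lemma ell_vzero: "Mok a b M \<Longrightarrow> ell q a b M vzero = vzero"
  by (rule ext) (simp add: ell_def vzero_def rmul_rzero rsumn_rzero)

lemma Ssub_zero: "Mok a b M \<Longrightarrow> vzero \<in> Ssub q a b M"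
  by (simp add: Ssub_def vzero_vc ell_vzero)

lemma Ssub_smul: "Mok a b M \<Longrightarrow> v \<in> Ssub q a b M \<Longrightarrow> r \<in> rcarrier q \<Longrightarrow> smul q r v \<in> Ssub q a b M"
  unfolding Ssub_def using ell_smul[of a b M v r] smul_vc[of v a r]
  by (auto simp: smul_def vzero_def rmul_rzero)

lemma Ssub_vadd: "Mok a b M \<Longrightarrow> v \<in> Ssub q a b M \<Longrightarrow> w \<in> Ssub q a b M \<Longrightarrow> vadd q v w \<in> Ssub q a b M"
  unfolding Ssub_def using ell_vadd[of a b M v w] vadd_vc[of v a w]
  by (auto simp: vadd_def vzero_def radd_rzero)

lemma smul_smul: "v \<in> vcarrier q m \<Longrightarrow> r \<in> rcarrier q \<Longrightarrow> c \<in> rcarrier q \<Longrightarrow>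
  smul q r (smul q c v) = smul q (r \<star> c) v"
  by (rule ext) (simp add: smul_def mm_eq[symmetric] R.m_assoc vc_rc)

lemma smul_vadd: "v \<in> vcarrier q m \<Longrightarrow> w \<in> vcarrier q m \<Longrightarrow> r \<in> rcarrier q \<Longrightarrow>
  smul q r (vadd q v w) = vadd q (smul q r v) (smul q r w)"
  by (rule ext) (simp add: smul_def vadd_def mm_eq[symmetric] RR_simps(5)[symmetric] R.r_distr vc_rc)

lemma mprod_UU: "v \<in> mprod q (Ipow q k) (vcarrier q m) \<Longrightarrow> v i \<in> UU k"
proof (induction rule: mprod.induct)
  case mprod_zero
  then show ?case using UU_zero by (simp add: vzero_def zz_eq)
next
  case (mprod_mul r v)
  then show ?case using UU_mul[of r k "v i"] by (simp add: smul_def Ipow_eq mm_eq vc_rc)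
next
  case (mprod_add u w)
  then show ?case using UU_add[of "u i" k "w i"] by (simp add: vadd_def RR_simps(5))
qed

lemma mprod_S:
  assumes M: "Mok a b M"
  shows "s \<in> mprod q (Ipow q J) (Ssub q a b M) \<Longrightarrow> \<exists>w\<in>Ssub q a b M. s = smul q (upow J) w"
proof (induction rule: mprod.induct)
  case mprod_zero
  have "vzero = smul q (upow J) vzero" by (simp add: smul_def vzero_def rmul_rzero)
  then show ?case using Ssub_zero[OF M] by blast
next
  case (mprod_mul r v)
  then obtain c where c: "c \<in> rcarrier q" "r = upow J \<star> c" by (auto simp: Ipow_eq UU_def)
  have v: "v \<in> vcarrier q a" using mprod_mul by (simp add: Ssub_def)
  have "smul q r v = smul q (upow J) (smul q c v)" using c v by (simp add: smul_smul)
  moreover have "smul q c v \<in> Ssub q a b M" using Ssub_smul[OF M mprod_mul(2) c(1)] .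
  ultimately show ?case by blast
next
  case (mprod_add u w)
  then obtain w1 w2 where w: "w1 \<in> Ssub q a b M" "u = smul q (upow J) w1" "w2 \<in> Ssub q a b M" "w = smul q (upow J) w2"
    by blast
  have "vadd q u w = smul q (upow J) (vadd q w1 w2)"
    using w smul_vadd[of w1 a w2 "upow J"] by (simp add: Ssub_def)
  moreover have "vadd q w1 w2 \<in> Ssub q a b M" using Ssub_vadd[OF M w(1,3)] .
  ultimately show ?case by blast
qed

end

context qr begin

lemma fixed_u: "v \<in> vcarrier q m \<Longrightarrow> smul q (gam q) v = v \<Longrightarrow> uu \<star> v j = zz"
proof -
  assume v: "v \<in> vcarrier q m" and fx: "smul q (gam q) v = v"
  have g: "gam q \<star> v j = v j" using fun_cong[OF fx, of j] by (simp add: smul_def mm_eq)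
  have "uu \<star> v j = (gam q \<ominus>\<^bsub>RR\<^esub> \<one>\<^bsub>RR\<^esub>) \<star> v j" by (simp add: gm1_eq)
  also have "\<dots> = gam q \<star> v j \<oplus>\<oplus> \<ominus>\<^bsub>RR\<^esub> (v j)"
    using vc_rc[OF v, of j] R.l_distr[of "gam q" "\<ominus>\<^bsub>RR\<^esub> \<one>\<^bsub>RR\<^esub>" "v j"] R.l_minus[of "\<one>\<^bsub>RR\<^esub>" "v j"]
    by (simp add: a_minus_def)
  also have "\<dots> = zz" using g vc_rc[OF v, of j] by (simp add: R.r_neg)
  finally show ?thesis .
qed

lemma witness:
  assumes M: "Mok a b M" and H: "hyp J" and s: "s \<in> S0k q a b M (Suc J)"
  shows "\<exists>st xs. st \<in> Ssub q a b M \<and> smul q (rpow q uu J) st = s \<and> xs \<in> vcarrier q a \<and> smul q (Dop q J) xs = st"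
proof -
  have sS: "s \<in> Ssub q a b M" and fx: "smul q (gam q) s = s" and sm: "s \<in> mprod q (Ipow q J) (Ssub q a b M)"
    using s by (auto simp: S0k_def fixedpart_def)
  obtain w where w: "w \<in> Ssub q a b M" "s = smul q (upow J) w" using mprod_S[OF M sm] by blast
  have wv: "w \<in> vcarrier q a" using w by (simp add: Ssub_def)
  have sv: "s \<in> vcarrier q a" using sS by (simp add: Ssub_def)
  have ann: "upow (Suc J) \<star> w j = zz" for j
  proof -
    have "upow (Suc J) \<star> w j = uu \<star> (upow J \<star> w j)" using vc_rc[OF wv] by (simp add: R.m_ac)
    also have "upow J \<star> w j = s j" using w by (simp add: smul_def mm_eq)
    finally show ?thesis using fixed_u[OF sv fx] by simp
  qed
  have ex: "\<exists>c\<in>rcarrier q. w j = Dop q J \<star> c" for j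
    using AnnU[OF H, of J "w j"] vc_rc[OF wv] ann by auto
  define xs where "xs = (\<lambda>j. if j < a then (SOME c. c \<in> rcarrier q \<and> w j = Dop q J \<star> c) else rzero)"
  have xsj: "j < a \<Longrightarrow> xs j \<in> rcarrier q \<and> w j = Dop q J \<star> xs j" for j
    unfolding xs_def using someI_ex[OF ex[of j, unfolded Bex_def]] by simp
  have xv: "xs \<in> vcarrier q a" by (rule vcI) (use xsj in blast, simp add: xs_def)
  have "smul q (Dop q J) xs = w"
  proof (rule ext)
    fix j show "smul q (Dop q J) xs j = w j"
    proof (cases "j < a")
      case True then show ?thesis using xsj[of j] by (simp add: smul_def mm_eq)
    next
      case False then show ?thesis using vc_out[OF wv, of j] by (simp add: smul_def xs_def rmul_rzero)
    qed
  qed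
  then show ?thesis using w xv by (auto simp: rpow_eq)
qed

lemma bd_boc:
  assumes M: "Mok a b M" and H: "hyp J"
    and st: "st \<in> Ssub q a b M" and sts: "smul q (rpow q uu J) st = s"
    and xs: "xs \<in> vcarrier q a" and xst: "smul q (Dop q J) xs = st"
  shows "smul q (Nrm q) xs = s" "\<And>i. ell q a b M xs i \<in> UU (Suc J)"
    "ell q a b M xs \<in> mprod q (Ipow q (Suc J)) (vcarrier q b)"
proof -
  have N: "Nrm q = upow J \<star> Dop q J" using upowD[OF H, of J] by simp
  show "smul q (Nrm q) xs = s"
  proof -
    have "smul q (Nrm q) xs = smul q (upow J) (smul q (Dop q J) xs)"
      unfolding N using smul_smul[OF xs, of "upow J" "Dop q J"] by simp
    then show ?thesis using sts xst by (simp add: rpow_eq)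
  qed
  have e0: "Dop q J \<star> ell q a b M xs i = zz" if i: "i < b" for i
  proof -
    have "ell q a b M st = vzero" using st by (simp add: Ssub_def)
    moreover have "ell q a b M st = smul q (Dop q J) (ell q a b M xs)"
      using ell_smul[OF M xs, of "Dop q J"] xst by simp
    ultimately have "smul q (Dop q J) (ell q a b M xs) i = vzero i" by simp
    then show ?thesis by (simp add: smul_def vzero_def mm_eq zz_eq)
  qed
  have ex: "\<exists>c\<in>rcarrier q. ell q a b M xs i = upow (Suc J) \<star> c" if "i < b" for i
    using AnnD[OF H, of J "ell q a b M xs i"] e0[OF that] vc_rc[OF ell_vc] by auto
  define c where "c = (\<lambda>i. if i < b then (SOME c. c \<in> rcarrier q \<and> ell q a b M xs i = upow (Suc J) \<star> c) else rzero)"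
  have ci: "i < b \<Longrightarrow> c i \<in> rcarrier q \<and> ell q a b M xs i = upow (Suc J) \<star> c i" for i
    unfolding c_def using someI_ex[OF ex[of i, unfolded Bex_def]] by simp
  have cv: "c \<in> vcarrier q b" by (rule vcI) (use ci in blast, simp add: c_def)
  have ellc: "ell q a b M xs = smul q (upow (Suc J)) c"
  proof (rule ext)
    fix i show "ell q a b M xs i = smul q (upow (Suc J)) c i"
    proof (cases "i < b")
      case True then show ?thesis using ci[of i] by (simp add: smul_def mm_eq)
    next
      case False then show ?thesis using vc_out[OF ell_vc, of b i] by (simp add: smul_def c_def rmul_rzero)
    qed
  qed
  show "ell q a b M xs \<in> mprod q (Ipow q (Suc J)) (vcarrier q b)"
    unfolding ellc by (rule mprod.mprod_mul) (simp only: Ipow_eq upow_UU, rule cv)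
  then show "\<And>i. ell q a b M xs i \<in> UU (Suc J)" by (rule mprod_UU)
qed

end

context qr begin

lemma diffN:
  assumes f: "f \<in> rcarrier q" and g: "g \<in> rcarrier q" and e: "Nrm q \<star> f = Nrm q \<star> g"
  shows "\<exists>z\<in>rcarrier q. f = g \<oplus>\<oplus> uu \<star> z"
proof -
  have "Nrm q \<star> (f \<ominus>\<^bsub>RR\<^esub> g) = Nrm q \<star> f \<ominus>\<^bsub>RR\<^esub> Nrm q \<star> g"
    using f g by (simp add: a_minus_def R.r_distr R.r_minus)
  also have "\<dots> = zz" using e g by (simp add: a_minus_def R.r_neg)
  finally have "f \<ominus>\<^bsub>RR\<^esub> g \<in> augI q" using Ann_N[of "f \<ominus>\<^bsub>RR\<^esub> g"] by simp
  then obtain z where z: "z \<in> rcarrier q" "f \<ominus>\<^bsub>RR\<^esub> g = uu \<star> z" using aug_u by blast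
  have "f = g \<oplus>\<oplus> (f \<ominus>\<^bsub>RR\<^esub> g)" using f g
    by (simp add: a_minus_def R.a_ac R.r_neg)
  then show ?thesis using z by auto
qed

lemma vdiff:
  assumes x: "x \<in> vcarrier q m" and xs: "xs \<in> vcarrier q m" and e: "smul q (Nrm q) x = smul q (Nrm q) xs"
  shows "\<exists>z\<in>vcarrier q m. \<forall>j<m. x j = xs j \<oplus>\<oplus> uu \<star> z j"
proof -
  have ex: "\<exists>z\<in>rcarrier q. x j = xs j \<oplus>\<oplus> uu \<star> z" for j
    using diffN[OF vc_rc[OF x] vc_rc[OF xs]] fun_cong[OF e, of j] by (simp add: smul_def mm_eq)
  define z where "z = (\<lambda>j. if j < m then (SOME z. z \<in> rcarrier q \<and> x j = xs j \<oplus>\<oplus> uu \<star> z) else rzero)"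
  have zj: "j < m \<Longrightarrow> z j \<in> rcarrier q \<and> x j = xs j \<oplus>\<oplus> uu \<star> z j" for j
    unfolding z_def using someI_ex[OF ex[of j, unfolded Bex_def]] by simp
  have "z \<in> vcarrier q m" by (rule vcI) (use zj in blast, simp add: z_def)
  then show ?thesis using zj by blast
qed

lemma evp_eq: "evp q m f y = rsumn q (\<lambda>i. f i \<star> y i) m"
  by (simp add: evp_def mm_eq)

lemma evp_rc[simp]: "evp q m f y \<in> rcarrier q" by (simp add: evp_def)

lemma rsumn_shift:
  "(\<And>l. l < m \<Longrightarrow> A l \<in> rcarrier q) \<Longrightarrow> (\<And>l. l < m \<Longrightarrow> B l \<in> rcarrier q) \<Longrightarrow>
   rsumn q (\<lambda>l. A l \<oplus>\<oplus> uu \<star> B l) m = rsumn q A m \<oplus>\<oplus> uu \<star> rsumn q B m"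
  by (simp add: rsumn_add rsumn_lmul)

lemma ell_shift:
  assumes M: "Mok a b M" and x: "x \<in> vcarrier q a" and xs: "xs \<in> vcarrier q a" and z: "z \<in> vcarrier q a"
    and e: "\<forall>j<a. x j = xs j \<oplus>\<oplus> uu \<star> z j" and i: "i < b"
  shows "ell q a b M x i = ell q a b M xs i \<oplus>\<oplus> uu \<star> ell q a b M z i"
proof -
  have "rsumn q (\<lambda>j. M i j \<star> x j) a = rsumn q (\<lambda>j. M i j \<star> xs j \<oplus>\<oplus> uu \<star> (M i j \<star> z j)) a"
    by (rule rsumn_cong) (simp add: e R.r_distr R.m_lcomm MokD[OF M i] vc_rc[OF xs] vc_rc[OF z])
  also have "\<dots> = rsumn q (\<lambda>j. M i j \<star> xs j) a \<oplus>\<oplus> uu \<star> rsumn q (\<lambda>j. M i j \<star> z j) a"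
    by (rule rsumn_shift) simp_all
  finally show ?thesis using i by (simp add: ell_at)
qed

lemma evp_shift1:
  assumes "\<forall>i<m. f i = g i \<oplus>\<oplus> uu \<star> h i" "\<And>i. g i \<in> rcarrier q" "\<And>i. h i \<in> rcarrier q" "\<And>i. y i \<in> rcarrier q"
  shows "evp q m f y = evp q m g y \<oplus>\<oplus> uu \<star> evp q m h y"
proof -
  have "evp q m f y = rsumn q (\<lambda>i. g i \<star> y i \<oplus>\<oplus> uu \<star> (h i \<star> y i)) m"
    unfolding evp_eq by (rule rsumn_cong) (simp add: assms R.l_distr R.m_assoc)
  also have "\<dots> = evp q m g y \<oplus>\<oplus> uu \<star> evp q m h y"
    unfolding evp_eq by (rule rsumn_shift) simp_all
  finally show ?thesis .
qed

lemma evp_shift2: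
  assumes "\<forall>i<m. y i = y' i \<oplus>\<oplus> uu \<star> w i" "\<And>i. f i \<in> rcarrier q" "\<And>i. y' i \<in> rcarrier q" "\<And>i. w i \<in> rcarrier q"
  shows "evp q m f y = evp q m f y' \<oplus>\<oplus> uu \<star> evp q m f w"
proof -
  have "evp q m f y = rsumn q (\<lambda>i. f i \<star> y' i \<oplus>\<oplus> uu \<star> (f i \<star> w i)) m"
    unfolding evp_eq by (rule rsumn_cong) (simp add: assms R.r_distr R.m_lcomm)
  also have "\<dots> = evp q m f y' \<oplus>\<oplus> uu \<star> evp q m f w"
    unfolding evp_eq by (rule rsumn_shift) simp_all
  finally show ?thesis .
qed

lemma evp_UU: "(\<And>i. i < m \<Longrightarrow> f i \<in> UU k) \<Longrightarrow> (\<And>i. y i \<in> rcarrier q) \<Longrightarrow> evp q m f y \<in> UU k"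
  unfolding evp_eq by (rule rsumn_UU) (simp add: UU_mul)

lemma evp_sym:
  assumes M: "Mok a b M" and x: "x \<in> vcarrier q a" and y: "y \<in> vcarrier q b"
  shows "evp q b (ell q a b M x) y = evp q a (ellstar q a b M y) x"
proof -
  have "evp q b (ell q a b M x) y = rsumn q (\<lambda>i. rsumn q (\<lambda>j. M i j \<star> x j \<star> y i) a) b"
    unfolding evp_eq
  proof (rule rsumn_cong)
    fix i assume i: "i < b"
    show "ell q a b M x i \<star> y i = rsumn q (\<lambda>j. M i j \<star> x j \<star> y i) a"
      using i by (simp add: ell_at rsumn_rmul vc_rc[OF y])
  qed
  also have "\<dots> = rsumn q (\<lambda>j. rsumn q (\<lambda>i. M i j \<star> x j \<star> y i) b) a"
    by (rule rsumn_swap) simp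
  also have "\<dots> = evp q a (ellstar q a b M y) x"
    unfolding evp_eq
  proof (rule rsumn_cong)
    fix j assume j: "j < a"
    have "rsumn q (\<lambda>i. M i j \<star> x j \<star> y i) b = rsumn q (\<lambda>i. M i j \<star> y i \<star> x j) b"
      by (rule rsumn_cong) (simp add: R.m_ac MokD[OF M _ j] vc_rc[OF x] vc_rc[OF y])
    then show "rsumn q (\<lambda>i. M i j \<star> x j \<star> y i) b = ellstar q a b M y j \<star> x j"
      using j by (simp add: ellstar_def mm_eq[symmetric] rsumn_rmul vc_rc[OF x])
  qed
  finally show ?thesis .
qed

lemma UU_Ipow: "Ipow q k = UU k" by (rule Ipow_eq)

lemma qcls_eq:
  assumes A: "A \<in> rcarrier q" and B: "B \<in> rcarrier q" and d: "d \<in> UU (Suc k)" and e: "A = B \<oplus>\<oplus> d"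
  shows "qcls q k A = qcls q k B"
proof -
  have drc: "d \<in> rcarrier q" using UU_rc[OF d] .
  have r: "radd q X (rneg q v) = X \<oplus>\<oplus> \<ominus>\<^bsub>RR\<^esub> v" if "v \<in> rcarrier q" for X v
    using that by (simp add: ainv_eq RR_simps(5))
  have "v \<in> qcls q k A \<longleftrightarrow> v \<in> qcls q k B" for v
  proof (cases "v \<in> rcarrier q")
    case v: True
    have e1: "A \<oplus>\<oplus> \<ominus>\<^bsub>RR\<^esub> v = d \<oplus>\<oplus> (B \<oplus>\<oplus> \<ominus>\<^bsub>RR\<^esub> v)" using e v B drc by (simp add: R.a_ac)
    have cB: "B \<in> carrier RR" and cv: "v \<in> carrier RR" and cd: "d \<in> carrier RR" using v B drc by simp_all
    have e2: "B \<oplus>\<oplus> \<ominus>\<^bsub>RR\<^esub> v = \<ominus>\<^bsub>RR\<^esub> d \<oplus>\<oplus> (A \<oplus>\<oplus> \<ominus>\<^bsub>RR\<^esub> v)"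
      unfolding e using cB cv cd by algebra
    have "A \<oplus>\<oplus> \<ominus>\<^bsub>RR\<^esub> v \<in> UU (Suc k) \<longleftrightarrow> B \<oplus>\<oplus> \<ominus>\<^bsub>RR\<^esub> v \<in> UU (Suc k)"
    proof
      assume "A \<oplus>\<oplus> \<ominus>\<^bsub>RR\<^esub> v \<in> UU (Suc k)"
      then show "B \<oplus>\<oplus> \<ominus>\<^bsub>RR\<^esub> v \<in> UU (Suc k)" unfolding e2 by (rule UU_add[OF UU_neg[OF d]])
    next
      assume "B \<oplus>\<oplus> \<ominus>\<^bsub>RR\<^esub> v \<in> UU (Suc k)"
      then show "A \<oplus>\<oplus> \<ominus>\<^bsub>RR\<^esub> v \<in> UU (Suc k)" unfolding e1 by (rule UU_add[OF d])
    qed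
    then show ?thesis
      unfolding qcls_def using v by (simp only: mem_Collect_eq r UU_Ipow simp_thms)
  next
    case False then show ?thesis by (simp add: qcls_def)
  qed
  then show ?thesis by blast
qed

lemma pairing_eq:
  assumes M: "Mok a b M"
    and x: "x \<in> vcarrier q a" and xs: "xs \<in> vcarrier q a" and ex: "smul q (Nrm q) x = smul q (Nrm q) xs"
    and y: "y \<in> vcarrier q b" and yt: "yt \<in> vcarrier q b" and ey: "smul q (Nrm q) y = smul q (Nrm q) yt"
    and Uxs: "\<And>i. i < b \<Longrightarrow> ell q a b M xs i \<in> UU k"
    and Uy: "\<And>j. j < a \<Longrightarrow> ellstar q a b M y j \<in> UU k"
  shows "qcls q k (evp q b (ell q a b M x) y) = qcls q k (evp q b (ell q a b M xs) yt)"
proof -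
  obtain z where z: "z \<in> vcarrier q a" "\<forall>j<a. x j = xs j \<oplus>\<oplus> uu \<star> z j" using vdiff[OF x xs ex] by blast
  obtain w where w: "w \<in> vcarrier q b" "\<forall>i<b. y i = yt i \<oplus>\<oplus> uu \<star> w i" using vdiff[OF y yt ey] by blast
  have E1: "evp q b (ell q a b M x) y = evp q b (ell q a b M xs) y \<oplus>\<oplus> uu \<star> evp q b (ell q a b M z) y"
    by (rule evp_shift1) (use ell_shift[OF M x xs z(1) z(2)] in auto, auto intro: vc_rc[OF ell_vc] vc_rc[OF y])
  have E2: "evp q b (ell q a b M xs) y = evp q b (ell q a b M xs) yt \<oplus>\<oplus> uu \<star> evp q b (ell q a b M xs) w"
    by (rule evp_shift2) (use w in auto, auto intro: vc_rc[OF ell_vc] vc_rc[OF yt] vc_rc[OF w(1)])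
  have d1: "uu \<star> evp q b (ell q a b M z) y \<in> UU (Suc k)"
    unfolding evp_sym[OF M z(1) y] by (intro UU_u evp_UU Uy vc_rc[OF z(1)])
  have d2: "uu \<star> evp q b (ell q a b M xs) w \<in> UU (Suc k)"
    by (intro UU_u evp_UU Uxs vc_rc[OF w(1)])
  have "evp q b (ell q a b M x) y = evp q b (ell q a b M xs) yt \<oplus>\<oplus>
          (uu \<star> evp q b (ell q a b M xs) w \<oplus>\<oplus> uu \<star> evp q b (ell q a b M z) y)"
    unfolding E1 E2 by (simp add: R.a_assoc)
  then show ?thesis
    by (rule qcls_eq[rotated 3]) (simp_all add: UU_add d1 d2)
qed

end

lemma pdvd:
  fixes p n j :: nat
  assumes p: "prime p" and j1: "1 \<le> j" and jp: "j < p"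
  shows "p ^ n dvd (p ^ n choose j)"
proof -
  have pos: "0 < p ^ n" using p prime_gt_0_nat by simp
  obtain q' where q': "p ^ n = Suc q'" using pos by (cases "p ^ n") auto
  obtain j' where j': "j = Suc j'" using j1 by (cases j) auto
  have eq: "j * (p ^ n choose j) = p ^ n * (q' choose j')"
    unfolding q' j' by (rule Suc_times_binomial)
  have "\<not> p dvd j" using j1 jp by (auto dest: dvd_imp_le)
  then have "coprime p j" using p by (simp add: prime_imp_coprime)
  then have "coprime (p ^ n) j" by simp
  moreover have "p ^ n dvd j * (p ^ n choose j)" using eq by simp
  ultimately show ?thesis by (simp add: coprime_dvd_mult_right_iff)
qed

theorem theoremB5:
  fixes p n a b k :: nat and M :: "nat \<Rightarrow> nat \<Rightarrow> relt" and s t :: vect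
  assumes "prime p" and "1 \<le> n"
    and "\<And>i j. i < b \<Longrightarrow> j < a \<Longrightarrow> M i j \<in> rcarrier (p ^ n)"
    and "1 \<le> k" and "k \<le> p - 1"
    and "s \<in> S0k (p ^ n) a b M k" and "t \<in> T0k (p ^ n) a b M k"
  shows "bd_pair (p ^ n) a b M k s t = boc_pair (p ^ n) a b M k s t"
proof -
  note pr = assms(1) and n1 = assms(2) and Mc = assms(3) and k1 = assms(4) and kp = assms(5)
    and sS = assms(6) and tT = assms(7)
  have p2: "2 \<le> p" using pr by (simp add: prime_ge_2_nat)
  have q1: "1 < p ^ n" using p2 n1 by (metis One_nat_def Suc_le_eq less_le_trans numeral_le_one_iff one_less_power semiring_norm(69) not_less)
  interpret Q: qr "p ^ n" by unfold_locales (rule q1)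
  obtain J where kJ: "k = Suc J" using k1 by (cases k) auto
  have Jp: "J < p" using kJ kp by simp
  have "p \<le> p ^ n" using n1 p2 by (simp add: self_le_power)
  then have H: "Q.hyp J"
    unfolding Q.hyp_def using Jp pdvd[OF pr] by (auto simp del: of_nat_power intro!: int_dvd_int_iff[THEN iffD2])
  have M: "Q.Mok a b M" unfolding Q.Mok_def using Mc by auto
  have Mt: "Q.Mok b a (\<lambda>j i. M i j)" by (rule Q.Mok_t[OF M])
  have s: "s \<in> S0k (p ^ n) a b M (Suc J)" using sS kJ by simp
  have t: "t \<in> S0k (p ^ n) b a (\<lambda>j i. M i j) (Suc J)" using tT kJ by (simp add: Q.T0k_t)
  obtain st0 xs0 where w1: "st0 \<in> Ssub (p ^ n) a b M" "smul (p ^ n) (rpow (p ^ n) (gm1 (p ^ n)) J) st0 = s"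
      "xs0 \<in> vcarrier (p ^ n) a" "smul (p ^ n) (Dop (p ^ n) J) xs0 = st0"
    using Q.witness[OF M H s] by blast
  obtain tt0 yt0 where w2: "tt0 \<in> Tsub (p ^ n) a b M" "smul (p ^ n) (rpow (p ^ n) (gm1 (p ^ n)) J) tt0 = t"
      "yt0 \<in> vcarrier (p ^ n) b" "smul (p ^ n) (Dop (p ^ n) J) yt0 = tt0"
    using Q.witness[OF Mt H t] by (auto simp: Q.Tsub_t)
  define P where "P = (\<lambda>(st, tt, xs, yt).
        st \<in> Ssub (p ^ n) a b M \<and> tt \<in> Tsub (p ^ n) a b M \<and>
        smul (p ^ n) (rpow (p ^ n) (gm1 (p ^ n)) (k - 1)) st = s \<and> smul (p ^ n) (rpow (p ^ n) (gm1 (p ^ n)) (k - 1)) tt = t \<and>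
        xs \<in> vcarrier (p ^ n) a \<and> yt \<in> vcarrier (p ^ n) b \<and>
        smul (p ^ n) (Dop (p ^ n) (k - 1)) xs = st \<and> smul (p ^ n) (Dop (p ^ n) (k - 1)) yt = tt)"
  have bd: "bd_pair (p ^ n) a b M k s t =
     (case Eps P of (st, tt, xs, yt) \<Rightarrow> qcls (p ^ n) k (evp (p ^ n) b (ell (p ^ n) a b M xs) yt))"
    unfolding bd_pair_def P_def ..
  have exP: "\<exists>z. P z"
    using w1 w2 kJ by (intro exI[of _ "(st0, tt0, xs0, yt0)"]) (simp add: P_def)
  obtain st tt xs yt where eP: "Eps P = (st, tt, xs, yt)" by (metis prod_cases4)
  have Pc: "P (st, tt, xs, yt)" using someI_ex[OF exP] eP by simp
  then have c1: "st \<in> Ssub (p ^ n) a b M" "tt \<in> Ssub (p ^ n) b a (\<lambda>j i. M i j)"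
    "smul (p ^ n) (rpow (p ^ n) (gm1 (p ^ n)) J) st = s" "smul (p ^ n) (rpow (p ^ n) (gm1 (p ^ n)) J) tt = t"
    "xs \<in> vcarrier (p ^ n) a" "yt \<in> vcarrier (p ^ n) b"
    "smul (p ^ n) (Dop (p ^ n) J) xs = st" "smul (p ^ n) (Dop (p ^ n) J) yt = tt"
    using kJ by (simp_all add: P_def Q.Tsub_t)
  note B1 = Q.bd_boc[OF M H c1(1) c1(3) c1(5) c1(7)]
  note B2 = Q.bd_boc[OF Mt H c1(2) c1(4) c1(6) c1(8)]
  define R where "R = (\<lambda>(x, y).
        x \<in> vcarrier (p ^ n) a \<and> ell (p ^ n) a b M x \<in> mprod (p ^ n) (Ipow (p ^ n) k) (vcarrier (p ^ n) b) \<and>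
        smul (p ^ n) (Nrm (p ^ n)) x = s \<and>
        y \<in> vcarrier (p ^ n) b \<and> ellstar (p ^ n) a b M y \<in> mprod (p ^ n) (Ipow (p ^ n) k) (vcarrier (p ^ n) a) \<and>
        smul (p ^ n) (Nrm (p ^ n)) y = t)"
  have boc: "boc_pair (p ^ n) a b M k s t =
     (case Eps R of (x, y) \<Rightarrow> qcls (p ^ n) k (evp (p ^ n) b (ell (p ^ n) a b M x) y))"
    unfolding boc_pair_def R_def ..
  have exR: "\<exists>z. R z"
    using B1 B2 c1 kJ by (intro exI[of _ "(xs, yt)"]) (simp add: R_def Q.ellstar_t)
  obtain x y where eR: "Eps R = (x, y)" by (metis prod.exhaust)
  have Rc: "R (x, y)" using someI_ex[OF exR] eR by simp
  then have c2: "x \<in> vcarrier (p ^ n) a" "smul (p ^ n) (Nrm (p ^ n)) x = s"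
    "y \<in> vcarrier (p ^ n) b" "ellstar (p ^ n) a b M y \<in> mprod (p ^ n) (Ipow (p ^ n) k) (vcarrier (p ^ n) a)"
    "smul (p ^ n) (Nrm (p ^ n)) y = t"
    by (simp_all add: R_def)
  have Uy: "\<And>j. j < a \<Longrightarrow> ellstar (p ^ n) a b M y j \<in> Q.UU k"
    using Q.mprod_UU[OF c2(4)] .
  have "qcls (p ^ n) k (evp (p ^ n) b (ell (p ^ n) a b M x) y) =
        qcls (p ^ n) k (evp (p ^ n) b (ell (p ^ n) a b M xs) yt)"
    by (rule Q.pairing_eq[OF M c2(1) c1(5) _ c2(3) c1(6) _ _ Uy])
       (use B1 B2 c2 kJ in auto)
  then show ?thesis unfolding bd boc eP eR by simp
qed

end
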